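(* Let $\mathrm{Jac}_{\bf f}(x)$ denote the $n\times m$ Jacobian matrix of ${\bf f}$ at $x$ (entry $(i,j)$ is $\partial f_j/\partial x_i$). Then $$\mathcal{R}^{lin}_{\bf f}=\bigcup_{x\in V_{\bf f}}\Big(\tfrac12\,\mathrm{Jac}_{\bf f}(x)\cdot \mathrm{S}^{lin}_{\bf f}\Big)\qquad\text{and}\qquad \mathcal{R}^{ed}_{\bf f}=\bigcup_{x\in V_{\bf f}}\Big(x-\tfrac12\,\mathrm{Jac}_{\bf f}(x)\cdot\mathrm{S}^{ed}_{\bf f}\Big),$$ and both unions are disjoint.
   Context: Let ${\bf f}=(f_1,\dots,f_m)$ with $f_i(x)=x^TA_ix+2a_i^Tx+\alpha_i$, $A_i$ real symmetric $n\times n$, $a_i\in\mathbb{R}^n$, $\alpha_i\in\mathbb{R}$, and $V_{\bf f}=\{x\in\mathbb{R}^n: f_1(x)=\dots=f_m(x)=0\}$. For $(C,c)\in\mathcal{S}^n\times\mathbb{R}^n$, write $H(\lambda)=C-\sum_i\lambda_iA_i$; the SDP-exact region $\mathcal{R}_{\bf f}$ is the set of $(C,c)$ (identified with $\begin{bmatrix}0&c^T\\c&C\end{bmatrix}$) for which there are $x\in V_{\bf f}$, $\lambda\in\mathbb{R}^m$ with $H(\lambda)\succ0$ and $c-\sum_i\lambda_ia_i+H(\lambda)x=0$. Define $\mathcal{R}^{lin}_{\bf f}=\{u\in\mathbb{R}^n:(C,c)=(0,u)\in\mathcal{R}_{\bf f}\}$ (SDP-exact region for minimizing $u^Tx$ on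 $V_{\bf f}$) and $\mathcal{R}^{ed}_{\bf f}=\{u\in\mathbb{R}^n:(C,c)=(I_n,-u)\in\mathcal{R}_{\bf f}\}$ (SDP-exact region for minimizing $\|x-u\|^2$ on $V_{\bf f}$). The master spectrahedra are $\mathrm{S}^{lin}_{\bf f}=\{\lambda\in\mathbb{R}^m:\sum_i\lambda_iA_i\prec0\}$ and $\mathrm{S}^{ed}_{\bf f}=\{\lambda\in\mathbb{R}^m:\sum_i\lambda_iA_i\prec I_n\}$. *)

theory Defs
  imports "HOL-Analysis.Analysis"
begin

definition quad :: "('m::finite \<Rightarrow> real^'n::finite^'n) \<Rightarrow> ('m \<Rightarrow> real^'n) \<Rightarrow> ('m \<Rightarrow> real)
    \<Rightarrow> real^'n \<Rightarrow> real^'m" where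
  "quad A a \<alpha> x = (\<chi> i. x \<bullet> (A i *v x) + 2 * (a i \<bullet> x) + \<alpha> i)"

definition variety :: "('m::finite \<Rightarrow> real^'n::finite^'n) \<Rightarrow> ('m \<Rightarrow> real^'n) \<Rightarrow> ('m \<Rightarrow> real)
    \<Rightarrow> (real^'n) set" where
  "variety A a \<alpha> = {x. quad A a \<alpha> x = 0}"

text \<open>Jacobian: n x m matrix, entry (i,j) = d f_j / d x_i (transpose of the
  matrix of the Frechet derivative of f : R^n -> R^m).\<close>
definition jac :: "(real^'n::finite \<Rightarrow> real^'m::finite) \<Rightarrow> real^'n \<Rightarrow> real^'m^'n" where
  "jac f x = transpose (matrix (frechet_derivative f (at x)))"

definition posdef :: "real^'n::finite^'n \<Rightarrow> bool" where
  "posdef H \<longleftrightarrow> transpose H = H \<and> (\<forall>v. v \<noteq> 0 \<longrightarrow> v \<bullet> (H *v v) > 0)"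

definition Hmat :: "('m::finite \<Rightarrow> real^'n::finite^'n) \<Rightarrow> real^'n^'n \<Rightarrow> real^'m \<Rightarrow> real^'n^'n" where
  "Hmat A C l = C - (\<Sum>i\<in>UNIV. l $ i *\<^sub>R A i)"

definition sdp_exact_region :: "('m::finite \<Rightarrow> real^'n::finite^'n) \<Rightarrow> ('m \<Rightarrow> real^'n) \<Rightarrow> ('m \<Rightarrow> real)
    \<Rightarrow> ((real^'n^'n) \<times> (real^'n)) set" where
  "sdp_exact_region A a \<alpha> = {(C, c). transpose C = C \<and>
     (\<exists>x \<in> variety A a \<alpha>. \<exists>l :: real^'m. posdef (Hmat A C l) \<and>
        c - (\<Sum>i\<in>UNIV. l $ i *\<^sub>R a i) + Hmat A C l *v x = 0)}"

definition R_lin :: "('m::finite \<Rightarrow> real^'n::finite^'n) \<Rightarrow> ('m \<Rightarrow> real^'n) \<Rightarrow> ('m \<Rightarrow> real) \<Rightarrow> (real^'n) set" where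
  "R_lin A a \<alpha> = {u. (0, u) \<in> sdp_exact_region A a \<alpha>}"

definition R_ed :: "('m::finite \<Rightarrow> real^'n::finite^'n) \<Rightarrow> ('m \<Rightarrow> real^'n) \<Rightarrow> ('m \<Rightarrow> real) \<Rightarrow> (real^'n) set" where
  "R_ed A a \<alpha> = {u. (mat 1, - u) \<in> sdp_exact_region A a \<alpha>}"

text \<open>Master spectrahedra. Sum l_i A_i < 0 means -(sum) positive definite;
  Sum l_i A_i < I means I - sum positive definite.\<close>
definition S_lin :: "('m::finite \<Rightarrow> real^'n::finite^'n) \<Rightarrow> (real^'m) set" where
  "S_lin A = {l. posdef (- (\<Sum>i\<in>UNIV. l $ i *\<^sub>R A i))}"

definition S_ed :: "('m::finite \<Rightarrow> real^'n::finite^'n) \<Rightarrow> (real^'m) set" where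
  "S_ed A = {l. posdef (mat 1 - (\<Sum>i\<in>UNIV. l $ i *\<^sub>R A i))}"

end

theory Submission
  imports Defs
begin


lemma quad_deriv:
  fixes A :: "'m::finite \<Rightarrow> real^'n::finite^'n"
  shows "(quad A a \<alpha> has_derivative
     (\<lambda>h. \<chi> i. x \<bullet> (A i *v h) + h \<bullet> (A i *v x) + 2 * (a i \<bullet> h))) (at x)"
proof -
  have "\<forall>j\<in>Basis. ((\<lambda>y. quad A a \<alpha> y \<bullet> j) has_derivative
     (\<lambda>h. (\<chi> i. x \<bullet> (A i *v h) + h \<bullet> (A i *v x) + 2 * (a i \<bullet> h)) \<bullet> j)) (at x)"
  proof
    fix j :: "real^'m" assume "j \<in> Basis"
    then obtain i where j: "j = axis i 1" by (auto simp: Basis_vec_def)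
    have lin: "bounded_linear (\<lambda>h. A i *v h)"
      by (simp add: linear_conv_bounded_linear)
    have d1: "((\<lambda>y. y \<bullet> (A i *v y)) has_derivative (\<lambda>h. x \<bullet> (A i *v h) + h \<bullet> (A i *v x))) (at x)"
      by (rule has_derivative_inner[OF has_derivative_ident bounded_linear.has_derivative[OF lin has_derivative_ident]])
    have d2: "((\<lambda>y. 2 * (a i \<bullet> y)) has_derivative (\<lambda>h. 2 * (a i \<bullet> h))) (at x)"
      by (rule has_derivative_mult_right[OF has_derivative_inner_right[OF has_derivative_ident]])
    have "((\<lambda>y. y \<bullet> (A i *v y) + 2 * (a i \<bullet> y) + \<alpha> i) has_derivative
       (\<lambda>h. (x \<bullet> (A i *v h) + h \<bullet> (A i *v x)) + 2 * (a i \<bullet> h) + 0)) (at x)"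
      by (rule has_derivative_add[OF has_derivative_add[OF d1 d2] has_derivative_const])
    moreover have e1: "(\<lambda>y. quad A a \<alpha> y \<bullet> j) = (\<lambda>y. y \<bullet> (A i *v y) + 2 * (a i \<bullet> y) + \<alpha> i)"
      by (simp add: j quad_def inner_axis fun_eq_iff)
    moreover have e2: "(\<lambda>h. (\<chi> i. x \<bullet> (A i *v h) + h \<bullet> (A i *v x) + 2 * (a i \<bullet> h)) \<bullet> j)
       = (\<lambda>h. (x \<bullet> (A i *v h) + h \<bullet> (A i *v x)) + 2 * (a i \<bullet> h) + 0)"
      by (simp add: j inner_axis fun_eq_iff)
    ultimately show "((\<lambda>y. quad A a \<alpha> y \<bullet> j) has_derivative
     (\<lambda>h. (\<chi> i. x \<bullet> (A i *v h) + h \<bullet> (A i *v x) + 2 * (a i \<bullet> h)) \<bullet> j)) (at x)"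
      by simp
  qed
  then show ?thesis by (rule has_derivative_componentwise_within[THEN iffD2])
qed



lemma inner_mv_sym:
  fixes A :: "real^'n::finite^'n"
  assumes "transpose A = A"
  shows "x \<bullet> (A *v y) = y \<bullet> (A *v x)"
proof -
  have "x \<bullet> (A *v y) = (x v* A) \<bullet> y" by (simp add: dot_lmul_matrix)
  also have "x v* A = A *v x" using vector_transpose_matrix[of x A] assms by simp
  finally show ?thesis by (simp add: inner_commute)
qed

lemma mv_sum:
  fixes A :: "'m::finite \<Rightarrow> real^'n::finite^'n"
  shows "(\<Sum>i\<in>S. l $ i *\<^sub>R A i) *v x = (\<Sum>i\<in>S. l $ i *\<^sub>R (A i *v x))"
proof (induct S rule: infinite_finite_induct)
  case (insert i F)
  then show ?case by (simp add: matrix_vector_mult_add_rdistrib scaleR_matrix_vector_assoc)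
qed auto

lemma neg_mv:
  fixes M :: "real^'n::finite^'n"
  shows "(- M) *v x = - (M *v x)"
  by (simp add: vec_eq_iff matrix_vector_mult_def sum_negf)

lemma mvc: "((M::real^'a::finite^'b::finite) *v v) $ k = (\<Sum>j\<in>UNIV. M $ k $ j * v $ j)"
  by (simp add: matrix_vector_mult_def)

lemma jac_eq:
  fixes A :: "'m::finite \<Rightarrow> real^'n::finite^'n"
  assumes symA: "\<And>i. transpose (A i) = A i"
  shows "(1/2) *\<^sub>R (jac (quad A a \<alpha>) x *v l) =
    (\<Sum>i\<in>UNIV. l $ i *\<^sub>R A i) *v x + (\<Sum>i\<in>UNIV. l $ i *\<^sub>R a i)"
proof -
  let ?D = "\<lambda>h. \<chi> i. x \<bullet> (A i *v h) + h \<bullet> (A i *v x) + 2 * (a i \<bullet> h)"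
  have fd: "frechet_derivative (quad A a \<alpha>) (at x) = ?D"
    by (rule frechet_derivative_at[OF quad_deriv, symmetric])
  have jk: "jac (quad A a \<alpha>) x $ k $ i = 2 * ((A i *v x) $ k) + 2 * (a i $ k)" for k i
  proof -
    have e: "x \<bullet> (A i *v axis k 1) = (A i *v x) $ k"
      using inner_mv_sym[OF symA[of i], of x "axis k 1"] by (simp only: inner_axis' inner_real_def mult_1)
    have "jac (quad A a \<alpha>) x $ k $ i = ?D (axis k 1) $ i"
      unfolding jac_def fd transpose_def matrix_def by (simp only: vec_lambda_beta)
    also have "\<dots> = x \<bullet> (A i *v axis k 1) + axis k 1 \<bullet> (A i *v x) + 2 * (a i \<bullet> axis k 1)"
      by (simp only: vec_lambda_beta)
    also have "\<dots> = 2 * ((A i *v x) $ k) + 2 * (a i $ k)"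
      by (simp only: e inner_axis inner_axis' inner_real_def mult_1 mult_1_right)
    finally show ?thesis .
  qed
  have "jac (quad A a \<alpha>) x *v l = 2 *\<^sub>R ((\<Sum>i\<in>UNIV. l $ i *\<^sub>R (A i *v x)) + (\<Sum>i\<in>UNIV. l $ i *\<^sub>R a i))"
  unfolding vec_eq_iff proof (intro allI)
    fix k
    have "(jac (quad A a \<alpha>) x *v l) $ k = (\<Sum>i\<in>UNIV. (2 * ((A i *v x) $ k) + 2 * (a i $ k)) * l $ i)"
      by (simp only: mvc jk)
    also have "\<dots> = (2 *\<^sub>R ((\<Sum>i\<in>UNIV. l $ i *\<^sub>R (A i *v x)) + (\<Sum>i\<in>UNIV. l $ i *\<^sub>R a i))) $ k"
      by (simp only: vector_scaleR_component vector_add_component sum_component)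
         (simp add: sum_distrib_left sum.distrib algebra_simps)
    finally show "(jac (quad A a \<alpha>) x *v l) $ k = (2 *\<^sub>R ((\<Sum>i\<in>UNIV. l $ i *\<^sub>R (A i *v x)) + (\<Sum>i\<in>UNIV. l $ i *\<^sub>R a i))) $ k" .
  qed
  then show ?thesis by (simp add: mv_sum)
qed

lemma var_ident:
  fixes A :: "'m::finite \<Rightarrow> real^'n::finite^'n"
  assumes symA: "\<And>i. transpose (A i) = A i"
    and x: "x \<in> variety A a \<alpha>" and y: "y \<in> variety A a \<alpha>"
  shows "((\<Sum>i\<in>UNIV. l $ i *\<^sub>R A i) *v x + (\<Sum>i\<in>UNIV. l $ i *\<^sub>R a i)) \<bullet> (y - x)
     = - (1/2) * ((y - x) \<bullet> ((\<Sum>i\<in>UNIV. l $ i *\<^sub>R A i) *v (y - x)))"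
proof -
  define d where "d = y - x"
  have yd: "y = x + d" by (simp add: d_def)
  have per: "(A i *v x + a i) \<bullet> d = - (1/2) * (d \<bullet> (A i *v d))" for i
  proof -
    have fx: "x \<bullet> (A i *v x) + 2 * (a i \<bullet> x) + \<alpha> i = 0"
      using x by (simp add: variety_def quad_def vec_eq_iff)
    have fy: "y \<bullet> (A i *v y) + 2 * (a i \<bullet> y) + \<alpha> i = 0"
      using y by (simp add: variety_def quad_def vec_eq_iff)
    have s: "x \<bullet> (A i *v d) = d \<bullet> (A i *v x)" by (rule inner_mv_sym[OF symA])
    have "y \<bullet> (A i *v y) = x \<bullet> (A i *v x) + 2 * (d \<bullet> (A i *v x)) + d \<bullet> (A i *v d)"
      unfolding yd by (simp add: matrix_vector_right_distrib inner_add_left inner_add_right s)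
    with fx fy show ?thesis by (simp add: yd inner_add_left inner_add_right inner_commute algebra_simps)
  qed
  have "((\<Sum>i\<in>UNIV. l $ i *\<^sub>R A i) *v x + (\<Sum>i\<in>UNIV. l $ i *\<^sub>R a i)) \<bullet> d
      = (\<Sum>i\<in>UNIV. l $ i * ((A i *v x + a i) \<bullet> d))"
    by (simp add: mv_sum inner_sum_left inner_add_left algebra_simps sum.distrib)
  also have "\<dots> = - (1/2) * (d \<bullet> ((\<Sum>i\<in>UNIV. l $ i *\<^sub>R A i) *v d))"
  proof -
    have "(\<Sum>i\<in>UNIV. l $ i * ((A i *v x + a i) \<bullet> d)) = (\<Sum>i\<in>UNIV. l $ i * (- (1/2) * (d \<bullet> (A i *v d))))"
      by (simp only: per)
    also have "\<dots> = - (1/2) * (d \<bullet> ((\<Sum>i\<in>UNIV. l $ i *\<^sub>R A i) *v d))"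
      by (simp add: mv_sum inner_sum_right sum_distrib_left algebra_simps)
    finally show ?thesis .
  qed
  finally show ?thesis by (simp add: d_def)
qed

theorem theorem4p1:
  fixes A :: "'m::finite \<Rightarrow> real^'n::finite^'n" and a :: "'m \<Rightarrow> real^'n" and \<alpha> :: "'m \<Rightarrow> real"
  assumes symA: "\<And>i. transpose (A i) = A i"
  shows "(R_lin A a \<alpha> = (\<Union>x\<in>variety A a \<alpha>. (\<lambda>l. (1/2) *\<^sub>R (jac (quad A a \<alpha>) x *v l)) ` S_lin A)) \<and>
    disjoint_family_on (\<lambda>x. (\<lambda>l. (1/2) *\<^sub>R (jac (quad A a \<alpha>) x *v l)) ` S_lin A) (variety A a \<alpha>) \<and>
    (R_ed A a \<alpha> = (\<Union>x\<in>variety A a \<alpha>. (\<lambda>l. x - (1/2) *\<^sub>R (jac (quad A a \<alpha>) x *v l)) ` S_ed A)) \<and>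
    disjoint_family_on (\<lambda>x. (\<lambda>l. x - (1/2) *\<^sub>R (jac (quad A a \<alpha>) x *v l)) ` S_ed A) (variety A a \<alpha>)"
proof -
  define V where "V = variety A a \<alpha>"
  define S where "S = (\<lambda>l::real^'m. \<Sum>i\<in>UNIV. l $ i *\<^sub>R A i)"
  define b where "b = (\<lambda>l::real^'m. \<Sum>i\<in>UNIV. l $ i *\<^sub>R a i)"
  define w where "w = (\<lambda>x l. S l *v x + b l)"
  have J: "(1/2) *\<^sub>R (jac (quad A a \<alpha>) x *v l) = w x l" for x l
    using jac_eq[OF symA] by (simp add: w_def S_def b_def)
  have I: "w x l \<bullet> (y - x) = - (1/2) * ((y - x) \<bullet> (S l *v (y - x)))"
    if "x \<in> V" "y \<in> V" for x y l
    using var_ident[OF symA, where x=x and y=y and l=l and a=a and \<alpha>=\<alpha>] that by (simp add: w_def S_def b_def V_def)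
  have Slin: "l \<in> S_lin A \<longleftrightarrow> posdef (- S l)" for l by (simp add: S_lin_def S_def)
  have Sed: "l \<in> S_ed A \<longleftrightarrow> posdef (mat 1 - S l)" for l by (simp add: S_ed_def S_def)
  have t0: "transpose (0::real^'n^'n) = 0" by (simp add: transpose_def vec_eq_iff)
  have t1: "transpose (mat 1::real^'n^'n) = mat 1" by (simp add: transpose_mat)
  have part1: "R_lin A a \<alpha> = (\<Union>x\<in>V. w x ` S_lin A)"
  proof (rule set_eqI)
    fix u
    have "u \<in> R_lin A a \<alpha> \<longleftrightarrow> (\<exists>x\<in>V. \<exists>l. posdef (- S l) \<and> u - b l + (- S l) *v x = 0)"
      by (simp add: R_lin_def sdp_exact_region_def Hmat_def t0 V_def S_def b_def)
    also have "\<dots> \<longleftrightarrow> (\<exists>x\<in>V. \<exists>l. l \<in> S_lin A \<and> u = w x l)"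
    proof -
      have e1: "u - b l + (- S l) *v x = u - w x l" for x l
        by (simp add: w_def neg_mv algebra_simps)
      show ?thesis by (simp only: e1 Slin right_minus_eq)
    qed
    finally show "u \<in> R_lin A a \<alpha> \<longleftrightarrow> u \<in> (\<Union>x\<in>V. w x ` S_lin A)" by auto
  qed
  have part3: "R_ed A a \<alpha> = (\<Union>x\<in>V. (\<lambda>l. x - w x l) ` S_ed A)"
  proof (rule set_eqI)
    fix u
    have "u \<in> R_ed A a \<alpha> \<longleftrightarrow> (\<exists>x\<in>V. \<exists>l. posdef (mat 1 - S l) \<and> - u - b l + (mat 1 - S l) *v x = 0)"
      by (simp add: R_ed_def sdp_exact_region_def Hmat_def t1 V_def S_def b_def)
    also have "\<dots> \<longleftrightarrow> (\<exists>x\<in>V. \<exists>l. l \<in> S_ed A \<and> u = x - w x l)"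
    proof -
      have e3: "- u - b l + (mat 1 - S l) *v x = (x - w x l) - u" for x l
        by (simp add: w_def matrix_vector_mult_diff_rdistrib algebra_simps)
      show ?thesis by (auto simp only: e3 Sed right_minus_eq)
    qed
    finally show "u \<in> R_ed A a \<alpha> \<longleftrightarrow> u \<in> (\<Union>x\<in>V. (\<lambda>l. x - w x l) ` S_ed A)" by auto
  qed
  have pos1: "w x l \<bullet> (y - x) > 0" if "x \<in> V" "y \<in> V" "x \<noteq> y" "l \<in> S_lin A" for x y l
  proof -
    have "(y - x) \<bullet> ((- S l) *v (y - x)) > 0"
      using that Slin[of l] by (simp add: posdef_def)
    then show ?thesis using I[OF that(1,2), of l] by (simp add: neg_mv)
  qed
  have part2: "disjoint_family_on (\<lambda>x. w x ` S_lin A) V"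
  unfolding disjoint_family_on_def proof (intro ballI impI)
    fix x y assume xy0: "x \<in> V" "y \<in> V" "x \<noteq> y"
    note xy = xy0
    show "w x ` S_lin A \<inter> w y ` S_lin A = {}"
    proof (rule ccontr)
      assume "w x ` S_lin A \<inter> w y ` S_lin A \<noteq> {}"
      then obtain l m where lm: "l \<in> S_lin A" "m \<in> S_lin A" "w x l = w y m" by blast
      have "w x l \<bullet> (y - x) > 0" using pos1 xy lm by blast
      moreover have "w y m \<bullet> (x - y) > 0" using pos1[of y x m] xy lm by auto
      ultimately show False using lm(3)
      proof -
        have "w x l \<bullet> (x - y) = - (w x l \<bullet> (y - x))" by (simp add: inner_diff_right)
        then show False using \<open>w x l \<bullet> (y - x) > 0\<close> \<open>w y m \<bullet> (x - y) > 0\<close> lm(3) by simp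
      qed
    qed
  qed
  have pos3: "(u - y) \<bullet> (u - y) > (u - x) \<bullet> (u - x)"
    if "x \<in> V" "y \<in> V" "x \<noteq> y" "l \<in> S_ed A" "u = x - w x l" for x y l u
  proof -
    define d where "d = y - x"
    have "d \<bullet> ((mat 1 - S l) *v d) > 0"
      using that Sed[of l] by (simp add: posdef_def d_def)
    then have p: "d \<bullet> d - d \<bullet> (S l *v d) > 0"
      by (simp add: matrix_vector_mult_diff_rdistrib inner_diff_right)
    have ux: "u - x = - w x l" using that by simp
    have uy: "u - y = (u - x) - d" by (simp add: d_def)
    have "(u - y) \<bullet> (u - y) = (u - x) \<bullet> (u - x) + 2 * (w x l \<bullet> d) + d \<bullet> d"
      unfolding uy ux by (simp add: inner_diff_left inner_diff_right inner_commute)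
    also have "\<dots> = (u - x) \<bullet> (u - x) + (d \<bullet> d - d \<bullet> (S l *v d))"
      using I[OF that(1,2), of l] by (simp add: d_def)
    finally show ?thesis using p by simp
  qed
  have part4: "disjoint_family_on (\<lambda>x. (\<lambda>l. x - w x l) ` S_ed A) V"
  unfolding disjoint_family_on_def proof (intro ballI impI)
    fix x y assume xy0: "x \<in> V" "y \<in> V" "x \<noteq> y"
    note xy = xy0
    show "(\<lambda>l. x - w x l) ` S_ed A \<inter> (\<lambda>l. y - w y l) ` S_ed A = {}"
    proof (rule ccontr)
      assume "(\<lambda>l. x - w x l) ` S_ed A \<inter> (\<lambda>l. y - w y l) ` S_ed A \<noteq> {}"
      then obtain l m u where lm: "l \<in> S_ed A" "m \<in> S_ed A" "u = x - w x l" "u = y - w y m" by blast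
      have "(u - y) \<bullet> (u - y) > (u - x) \<bullet> (u - x)" by (rule pos3[OF xy lm(1) lm(3)])
      moreover have "(u - x) \<bullet> (u - x) > (u - y) \<bullet> (u - y)" using xy(3) by (intro pos3[OF xy(2) xy(1) _ lm(2) lm(4)]) auto
      ultimately show False by simp
    qed
  qed
  have F: "(\<lambda>l. (1/2) *\<^sub>R (jac (quad A a \<alpha>) x *v l)) = w x" for x
    by (rule ext, rule J)
  have G: "(\<lambda>l. x - (1/2) *\<^sub>R (jac (quad A a \<alpha>) x *v l)) = (\<lambda>l. x - w x l)" for x
    by (rule ext, simp only: J)
  show ?thesis unfolding F G V_def[symmetric]
    by (intro conjI) (rule part1 part2 part3 part4)+
qed

end
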